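(* Every closed quantifier $Q\subseteq 2^{\mathbb{N}^k}$ has a unique support, i.e. there is a unique $\subseteq$-minimal set $S\subseteq\mathbb{N}^k$ supporting $Q$.
   Context: A quantifier of type $\langle k\rangle$ on $\mathbb{N}$ is a family $Q$ of subsets of $\mathbb{N}^k$, identified with a subset of $2^{\mathbb{N}^k}$ (product topology). A set $S\subseteq\mathbb{N}^k$ supports $Q$ if for all $A,B\subseteq\mathbb{N}^k$ with $A\cap S=B\cap S$ we have $A\in Q\iff B\in Q$. A support of $Q$ is a minimal (under inclusion) set supporting $Q$. *)

theory Defs
  imports "HOL-Analysis.Analysis"
begin

text \<open>Points of N^k are vectors of type nat^'k (with CARD('k) = k).
  A quantifier Q is a family of subsets of N^k; it is identified with the set of
  characteristic functions in the Cantor-type space (nat^'k => bool), which carries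
  the product topology (bool has the discrete topology).\<close>

definition supports :: "'a set set \<Rightarrow> 'a set \<Rightarrow> bool" where
  "supports Q S \<longleftrightarrow> (\<forall>A B. A \<inter> S = B \<inter> S \<longrightarrow> (A \<in> Q \<longleftrightarrow> B \<in> Q))"

definition is_support :: "'a set set \<Rightarrow> 'a set \<Rightarrow> bool" where
  "is_support Q S \<longleftrightarrow> supports Q S \<and> (\<forall>T. T \<subseteq> S \<and> supports Q T \<longrightarrow> T = S)"

definition char_fun :: "'a set \<Rightarrow> ('a \<Rightarrow> bool)" where
  "char_fun A = (\<lambda>x. x \<in> A)"

end

theory Submission
  imports Defs
begin

lemma supports_Int:
  assumes "supports Q S" "supports Q T"
  shows "supports Q (S \<inter> T)"
  unfolding supports_def
proof (intro allI impI)
  fix A B assume h: "A \<inter> (S \<inter> T) = B \<inter> (S \<inter> T)"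
  define C where "C = (A \<inter> S) \<union> (B - S)"
  have "C \<inter> S = A \<inter> S" unfolding C_def by auto
  hence 1: "A \<in> Q \<longleftrightarrow> C \<in> Q" using assms(1) unfolding supports_def by metis
  have "C \<inter> T = B \<inter> T" using h unfolding C_def by blast
  hence 2: "C \<in> Q \<longleftrightarrow> B \<in> Q" using assms(2) unfolding supports_def by metis
  show "A \<in> Q \<longleftrightarrow> B \<in> Q" using 1 2 by simp
qed

lemma supports_UNIV: "supports Q UNIV"
  unfolding supports_def by simp

lemma supports_Inter_finite:
  assumes "finite F" "\<forall>x\<in>F. supports Q (G x)"
  shows "supports Q (\<Inter>x\<in>F. G x)"
  using assms
proof (induction F rule: finite_induct)
  case empty then show ?case by (simp add: supports_UNIV)
next
  case (insert x F)
  then show ?case using supports_Int by (metis INT_insert insert_iff)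
qed

lemma closure_char:
  fixes Q :: "'a set set"
  assumes cl: "closed (char_fun ` Q)"
    and H: "\<And>F. finite F \<Longrightarrow> \<exists>C\<in>Q. C \<inter> F = B \<inter> F"
  shows "B \<in> Q"
proof (rule ccontr)
  assume nb: "B \<notin> Q"
  have "char_fun B \<notin> char_fun ` Q"
  proof
    assume "char_fun B \<in> char_fun ` Q"
    then obtain C where "C \<in> Q" "char_fun B = char_fun C" by auto
    hence "B = C" unfolding char_fun_def by (metis Collect_mem_eq)
    with nb \<open>C \<in> Q\<close> show False by simp
  qed
  hence "char_fun B \<in> - (char_fun ` Q)" by simp
  moreover have "open (- (char_fun ` Q))" using cl by (simp add: open_Compl)
  ultimately have "openin (product_topology (\<lambda>i. euclidean) UNIV) (- (char_fun ` Q))"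
    unfolding open_fun_def by simp
  from product_topology_open_contains_basis[OF this \<open>char_fun B \<in> - (char_fun ` Q)\<close>]
  obtain X where X: "char_fun B \<in> (\<Pi>\<^sub>E i\<in>UNIV. X i)"
      "finite {i. X i \<noteq> topspace euclidean}"
      "(\<Pi>\<^sub>E i\<in>UNIV. X i) \<subseteq> - (char_fun ` Q)" by auto
  define F where "F = {i. X i \<noteq> UNIV}"
  have "finite F" using X(2) unfolding F_def by simp
  then obtain C where C: "C \<in> Q" "C \<inter> F = B \<inter> F" using H by blast
  have "char_fun C \<in> (\<Pi>\<^sub>E i\<in>UNIV. X i)"
  proof -
    have "char_fun C i \<in> X i" for i
    proof (cases "i \<in> F")
      case True
      hence "char_fun C i = char_fun B i" using C(2) unfolding char_fun_def by blast
      thus ?thesis using X(1) by auto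
    next
      case False thus ?thesis unfolding F_def by auto
    qed
    thus ?thesis by auto
  qed
  with X(3) C(1) show False by auto
qed

theorem lemma16:
  fixes Q :: "(nat ^ 'k) set set"
  assumes "closed (char_fun ` Q)"
  shows "\<exists>!S. is_support Q S"
proof -
  define S0 where "S0 = \<Inter>{S. supports Q S}"
  have dir: "B \<in> Q" if AQ: "A \<in> Q" and eq: "A \<inter> S0 = B \<inter> S0" for A B
  proof (rule closure_char[OF assms])
    fix F :: "(nat ^ 'k) set" assume fF: "finite F"
    have "\<forall>x\<in>F - S0. \<exists>S. supports Q S \<and> x \<notin> S" unfolding S0_def by auto
    then obtain G where G: "\<forall>x\<in>F - S0. supports Q (G x) \<and> x \<notin> G x" by metis
    define S' where "S' = (\<Inter>x\<in>F - S0. G x)"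
    have sS': "supports Q S'" unfolding S'_def
      using supports_Inter_finite[of "F - S0" Q G] fF G by auto
    have sub: "S' \<inter> F \<subseteq> S0" using G unfolding S'_def by blast
    define C where "C = (A \<inter> S') \<union> (B - S')"
    have "C \<inter> S' = A \<inter> S'" unfolding C_def by auto
    hence "C \<in> Q" using sS' AQ unfolding supports_def by metis
    moreover have "C \<inter> F = B \<inter> F" using sub eq unfolding C_def by blast
    ultimately show "\<exists>C\<in>Q. C \<inter> F = B \<inter> F" by blast
  qed
  have sup0: "supports Q S0" unfolding supports_def
    using dir by (metis)
  have min0: "\<And>T. supports Q T \<Longrightarrow> S0 \<subseteq> T" unfolding S0_def by auto
  have "is_support Q S0" unfolding is_support_def using sup0 min0 by auto
  moreover have "S = S0" if "is_support Q S" for S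
  proof -
    have "supports Q S" "\<forall>T. T \<subseteq> S \<and> supports Q T \<longrightarrow> T = S"
      using that unfolding is_support_def by auto
    thus ?thesis using sup0 min0 by blast
  qed
  ultimately show ?thesis by blast
qed

end
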